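(* Consider the data-selling model described in the context, with network $G$ on $n$ buyers, and assume $z_0<\frac{1}{2\sqrt{\gamma}}\cdot\frac{n+1}{2n+1}$. Let $m=\alpha(G)$, and let $C$ and $C'$ be optimal contracts. (Their target sets $M(C),M(C')$ are maximum independent sets of size $m$, and both have common precision $z=\sqrt{m/\gamma}-z_0$.) Let $k(C)=(m_1,\dots,m_{n-m})$ be the values $m_i=|N_i\cap M(C)|$ for $i\in N\setminus M(C)$, arranged in non-increasing order. Define $k(C')=(m'_1,\dots,m'_{n-m})$ in the same way. Then $w(z_0,G,M(C))\ge w(z_0,G,M(C'))$ if either of the following holds: (i) $k(C)\ge k(C')$ componentwise; (ii) $\sum_{i=1}^{n-m}m_i=\sum_{i=1}^{n-m}m'_i$, and $k(C)$ dominates $k(C')$ in the second-order stochastic dominance sense (that is, the uniform distribution on the entries of $k(C)$ second-order stochastically dominates the uniform distribution on the entries of $k(C')$).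
   Context: Model. There is a finite set of buyers $N=\{1,\dots,n\}$ and an undirected network $G$ on $N$: for $i\neq j$, $g_{ij}=g_{ji}\in\{0,1\}$, with $g_{ij}=1$ iff $i$ and $j$ are linked. $N_i=\{j\neq i:g_{ij}=1\}$ is the set of neighbors of $i$. A state $\theta\sim N(0,1/z_0)$ with $z_0>0$ is unknown to all. A contract $C$ of the seller consists of a target set $M(C)\subseteq N$, a common precision $z>0$, and prices $p_i\ge0$ for $i\in M(C)$. Each $i\in M(C)$ receives a signal $s_i=\theta+\varepsilon_i$, with $\varepsilon_i\sim N(0,1/z)$ independent. Each buyer observes the signals of his neighbors in $M(C)$ (and his own if he is in $M(C)$) and then chooses $a_i$ to maximize $E[-(a_i-\theta)^2]$. With $m_i=|N_i\cap M(C)|$, buyer $i\in M(C)$ gets expected payoff $-\frac{1}{z_0+(m_i+1)z}-p_i$, and buyer $i\notin M(C)$ gets $-\frac{1}{z_0+m_iz}$. Buyer $i\in M(C)$ accepts iff $p_i\le \frac{1}{z_0+m_iz}-\frac{1}{z_0+(m_i+1)z}$. A contract is feasible if every $i\in M(C)$ accepts. The seller's profit is $\pi(C)=\sum_{i\in M(C)}p_i-\gamma z$ with $\gamma>0$. An optimal contract is a feasible contract maximizing $\pi$. A maximum independent set is a largest set of pairwise unlinked buyers, and $\alpha(G)$ is its size. At an optimal contract (with prices $p_i=\frac1{z_0}-\sqrt{\gamma/m}$ and $z=\sqrt{m/\gamma}-z_0$), the consumer welfare (the sum of buyers' expected payoffs) is $$w(z_0,G,M(C))=-\sum_{i\in M(C)}\frac{1}{z_0}-\sum_{i\in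 N\setminus M(C)}\frac{1}{z_0+m_i\left(\sqrt{m/\gamma}-z_0\right)}.$$ *)

theory Defs
  imports "HOL-Analysis.Analysis" "HOL-Library.Multiset"
begin

text \<open>Network: finite buyer set V, adjacency relation E (assumed symmetric and
irreflexive on V in the theorem).\<close>

definition nbrs :: "'a set \<Rightarrow> ('a \<Rightarrow> 'a \<Rightarrow> bool) \<Rightarrow> 'a \<Rightarrow> 'a set" where
  "nbrs V E i = {j \<in> V. j \<noteq> i \<and> E i j}"

definition independent :: "'a set \<Rightarrow> ('a \<Rightarrow> 'a \<Rightarrow> bool) \<Rightarrow> 'a set \<Rightarrow> bool" where
  "independent V E S \<longleftrightarrow> S \<subseteq> V \<and> (\<forall>i\<in>S. \<forall>j\<in>S. i \<noteq> j \<longrightarrow> \<not> E i j)"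

definition alpha :: "'a set \<Rightarrow> ('a \<Rightarrow> 'a \<Rightarrow> bool) \<Rightarrow> nat" where
  "alpha V E = Max {card S | S. independent V E S}"

definition mcount :: "'a set \<Rightarrow> ('a \<Rightarrow> 'a \<Rightarrow> bool) \<Rightarrow> 'a set \<Rightarrow> 'a \<Rightarrow> nat" where
  "mcount V E M i = card (nbrs V E i \<inter> M)"

text \<open>A contract: (target set, common precision z, prices p).\<close>
type_synonym 'a contract = "'a set \<times> real \<times> ('a \<Rightarrow> real)"

definition feasible :: "'a set \<Rightarrow> ('a \<Rightarrow> 'a \<Rightarrow> bool) \<Rightarrow> real \<Rightarrow> 'a contract \<Rightarrow> bool" where
  "feasible V E z0 C = (case C of (M, z, p) \<Rightarrow>
     M \<subseteq> V \<and> z > 0 \<and>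
     (\<forall>i\<in>M. p i \<ge> 0 \<and>
        p i \<le> 1 / (z0 + real (mcount V E M i) * z) - 1 / (z0 + (real (mcount V E M i) + 1) * z)))"

definition profit :: "real \<Rightarrow> 'a contract \<Rightarrow> real" where
  "profit \<gamma> C = (case C of (M, z, p) \<Rightarrow> (\<Sum>i\<in>M. p i) - \<gamma> * z)"

definition optimal :: "'a set \<Rightarrow> ('a \<Rightarrow> 'a \<Rightarrow> bool) \<Rightarrow> real \<Rightarrow> real \<Rightarrow> 'a contract \<Rightarrow> bool" where
  "optimal V E z0 \<gamma> C \<longleftrightarrow> feasible V E z0 C \<and>
     (\<forall>C'. feasible V E z0 C' \<longrightarrow> profit \<gamma> C' \<le> profit \<gamma> C)"

definition target :: "'a contract \<Rightarrow> 'a set" where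
  "target C = fst C"

text \<open>Consumer welfare at an optimal contract with target set M (formula from the paper,
with m = alpha(G)).\<close>
definition welfare :: "'a set \<Rightarrow> ('a \<Rightarrow> 'a \<Rightarrow> bool) \<Rightarrow> real \<Rightarrow> real \<Rightarrow> 'a set \<Rightarrow> real" where
  "welfare V E z0 \<gamma> M =
     - (\<Sum>i\<in>M. 1 / z0)
     - (\<Sum>i\<in>V - M. 1 / (z0 + real (mcount V E M i) * (sqrt (real (alpha V E) / \<gamma>) - z0)))"

definition kvec :: "'a set \<Rightarrow> ('a \<Rightarrow> 'a \<Rightarrow> bool) \<Rightarrow> 'a set \<Rightarrow> nat list" where
  "kvec V E M = rev (sorted_list_of_multiset (image_mset (mcount V E M) (mset_set (V - M))))"

definition ssd :: "real list \<Rightarrow> real list \<Rightarrow> bool" where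
  "ssd xs ys \<longleftrightarrow> (\<forall>u :: real \<Rightarrow> real. mono u \<and> concave_on UNIV u \<longrightarrow>
      sum_list (map u ys) / real (length ys) \<le> sum_list (map u xs) / real (length xs))"

end

theory Submission
  imports Defs
begin

definition gg :: "real \<Rightarrow> real \<Rightarrow> nat \<Rightarrow> real" where
  "gg z0 z k = 1/(z0 + real k * z) - 1/(z0 + (real k + 1) * z)"

lemma amgm:
  assumes "a \<ge> 0" "w > 0" "g > 0"
  shows "2 * sqrt g * sqrt a \<le> a / w + g * w"
proof -
  have "0 \<le> (sqrt a / sqrt w - sqrt g * sqrt w)^2" by simp
  also have "\<dots> = a / w - 2 * sqrt g * sqrt a + g * w"
    using assms by (simp add: power2_diff power_divide power_mult_distrib)
  finally show ?thesis by simp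
qed

lemma gg_bound:
  assumes "z0 > 0" "z > 0" "k \<ge> 1"
  shows "gg z0 z k \<le> 2 / (5 * (real k + 1) * z0)"
proof -
  have A: "z0 + real k * z > 0" "z0 + (real k + 1) * z > 0" using assms by (auto intro!: add_pos_nonneg)
  have e: "gg z0 z k = z / ((z0 + real k * z) * (z0 + (real k + 1) * z))"
    using A unfolding gg_def by (simp add: field_simps)
  have "(4 * real k + 1) * z0 * z \<le> (z0 + real k * z) * (z0 + (real k + 1) * z)"
  proof -
    have "0 \<le> (z0 - real k * z)^2 + real k * z^2" using assms by simp
    then show ?thesis by (simp add: power2_eq_square algebra_simps)
  qed
  then have "z / ((z0 + real k * z) * (z0 + (real k + 1) * z)) \<le> z / ((4 * real k + 1) * z0 * z)"
    using A assms by (intro divide_left_mono) auto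
  also have "\<dots> = 1 / ((4 * real k + 1) * z0)" using assms by simp
  also have "\<dots> \<le> 2 / (5 * (real k + 1) * z0)"
    using assms by (simp add: divide_simps) 
  finally show ?thesis using e by simp
qed

lemma H_strict:
  assumes "0 \<le> m" "m < a" "1 \<le> a" "s > 0" "z0 > 0" "2 * s * z0 < 1"
  shows "m / z0 - 2 * s * sqrt m < a / z0 - 2 * s * sqrt a"
proof -
  define p where "p = sqrt m"
  define q where "q = sqrt a"
  have p0: "p \<ge> 0" and pq: "p < q" and q1: "q \<ge> 1" using assms unfolding p_def q_def by auto
  have mp: "m = p^2" and aq: "a = q^2" using assms unfolding p_def q_def by auto
  have "2 * s < 1 / z0" using assms by (simp add: field_simps)
  also have "1 / z0 \<le> (q + p) / z0" using q1 p0 assms by (simp add: divide_right_mono)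
  finally have "2 * s * (q - p) < (q + p) / z0 * (q - p)" using pq by (intro mult_strict_right_mono) auto
  also have "\<dots> = (q^2 - p^2) / z0" by (simp add: power2_eq_square algebra_simps)
  finally have "2 * s * (q - p) < (q^2 - p^2) / z0" .
  moreover have "sqrt m = p" "sqrt a = q" using p_def q_def by auto
  ultimately show ?thesis unfolding mp aq using p0 q1 by (simp add: diff_divide_distrib algebra_simps)
qed

lemma H_mono:
  assumes "0 \<le> m" "m \<le> a" "1 \<le> a" "s > 0" "z0 > 0" "2 * s * z0 < 1"
  shows "m / z0 - 2 * s * sqrt m \<le> a / z0 - 2 * s * sqrt a"
  using H_strict[OF assms(1) _ assms(3-6)] assms(2) by (cases "m = a") auto

lemma H_jump:
  assumes "0 \<le> i" "1 \<le> t" "s > 0" "z0 > 0" "s * z0 < 3/10"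
  shows "i / z0 - 2 * s * sqrt i + 2 * t / (5 * z0) < (i + t) / z0 - 2 * s * sqrt (i + t)"
proof -
  have "t * 1 \<le> t * t" using assms by (intro mult_left_mono) auto
  moreover have "0 \<le> t * (sqrt i * 2)" using assms by simp
  ultimately have "t \<le> t * t + t * (sqrt i * 2)" by linarith
  then have "i + t \<le> (sqrt i + t)^2" using assms by (simp add: power2_eq_square algebra_simps)
  then have r: "sqrt (i + t) \<le> sqrt i + t"
    using assms by (intro real_le_lsqrt) auto
  have "2 * s * t * (5 * z0) < 3 * t" using assms by (simp add: algebra_simps)
  then have "2 * s * t < 3 * t / (5 * z0)" using assms by (simp add: field_simps)
  moreover have "2 * s * (sqrt (i + t) - sqrt i) \<le> 2 * s * t" using r assms by simp
  ultimately have "2 * s * (sqrt (i + t) - sqrt i) < 3 * t / (5 * z0)" by linarith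
  moreover have "(i + t) / z0 = i / z0 + 2 * t / (5 * z0) + 3 * t / (5 * z0)" using assms by (simp add: field_simps)
  ultimately show ?thesis by (simp add: algebra_simps)
qed

lemma mcount_mono: "finite V \<Longrightarrow> M' \<subseteq> M \<Longrightarrow> mcount V E M' i \<le> mcount V E M i"
  unfolding mcount_def nbrs_def by (rule card_mono) auto

lemma caro_wei:
  assumes finV: "finite V" and symE: "\<forall>i\<in>V. \<forall>j\<in>V. E i j \<longleftrightarrow> E j i"
    and finM0: "finite M"
  shows "M \<subseteq> V \<Longrightarrow> \<exists>T \<subseteq> M. independent V E T \<and>
    (\<Sum>i\<in>M. 1 / (real (mcount V E M i) + 1)) \<le> real (card T)"
  using finM0
proof (induction M rule: finite_psubset_induct)
  case (psubset M)
  show ?case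
  proof (cases "M = {}")
    case True
    then show ?thesis by (auto simp: independent_def)
  next
    case False
    have finM: "finite M" using psubset by auto
    obtain v where vM: "v \<in> M" and vmin: "\<forall>w\<in>M. mcount V E M v \<le> mcount V E M w"
      using finM False
      by (metis (no_types, lifting) arg_min_if_finite(1) arg_min_if_finite(2) not_le)
    define Nv where "Nv = nbrs V E v \<inter> M"
    define M' where "M' = M - insert v Nv"
    have vNv: "v \<notin> Nv" unfolding Nv_def nbrs_def by auto
    have NvM: "insert v Nv \<subseteq> M" using vM unfolding Nv_def by auto
    have sub: "M' \<subset> M" unfolding M'_def using vM by auto
    have M'V: "M' \<subseteq> V" using psubset.prems sub by auto
    obtain T' where T': "T' \<subseteq> M'" "independent V E T'"
      "(\<Sum>i\<in>M'. 1 / (real (mcount V E M' i) + 1)) \<le> real (card T')"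
      using psubset.IH[OF sub M'V] by blast
    define T where "T = insert v T'"
    have vT': "v \<notin> T'" using T'(1) unfolding M'_def by auto
    have finT': "finite T'" using T'(1) sub finM by (meson finite_subset psubset_imp_subset)
    have indT: "independent V E T"
    proof -
      have "\<not> E v j" if "j \<in> T'" for j
      proof
        assume "E v j"
        moreover have "j \<in> V" "j \<noteq> v" "j \<in> M" using that T'(1) M'V vT' sub by auto
        ultimately have "j \<in> Nv" unfolding Nv_def nbrs_def by auto
        then show False using that T'(1) unfolding M'_def by auto
      qed
      moreover have "v \<in> V" using vM psubset.prems by auto
      moreover have "T' \<subseteq> V" using T'(1) M'V by auto
      ultimately show ?thesis using T'(2) symE unfolding T_def independent_def by (metis insert_iff insert_subset subsetD)
    qed
    have cT: "card T = card T' + 1" unfolding T_def using vT' finT' by simp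
    have c1: "card (insert v Nv) = mcount V E M v + 1"
    proof -
      have "finite Nv" using finM NvM by (meson finite_subset insert_subset)
      then show ?thesis using vNv unfolding mcount_def Nv_def[symmetric] by simp
    qed
    have s1: "(\<Sum>i\<in>insert v Nv. 1 / (real (mcount V E M i) + 1)) \<le> 1"
    proof -
      have "(\<Sum>i\<in>insert v Nv. 1 / (real (mcount V E M i) + 1))
          \<le> (\<Sum>i\<in>insert v Nv. 1 / (real (mcount V E M v) + 1))"
        using vmin NvM by (intro sum_mono) (auto simp: divide_simps)
      also have "\<dots> = 1" using c1 by simp
      finally show ?thesis .
    qed
    have s2: "(\<Sum>i\<in>M'. 1 / (real (mcount V E M i) + 1)) \<le> (\<Sum>i\<in>M'. 1 / (real (mcount V E M' i) + 1))"
      using mcount_mono[OF finV, of M' M E] sub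
      by (intro sum_mono) (auto simp: divide_simps)
    have split: "(\<Sum>i\<in>M. 1 / (real (mcount V E M i) + 1)) =
       (\<Sum>i\<in>insert v Nv. 1 / (real (mcount V E M i) + 1)) + (\<Sum>i\<in>M'. 1 / (real (mcount V E M i) + 1))"
      unfolding M'_def using NvM finM by (metis sum.subset_diff add.commute)
    have TM: "T \<subseteq> M" using T'(1) sub vM unfolding T_def by auto
    have "(\<Sum>i\<in>M. 1 / (real (mcount V E M i) + 1)) \<le> real (card T)"
      using split s1 s2 T'(3) cT by simp
    then show ?thesis using TM indT by blast
  qed
qed

lemma alpha_facts:
  assumes finV: "finite V"
  shows "\<And>S. independent V E S \<Longrightarrow> card S \<le> alpha V E"
    and "\<exists>S. independent V E S \<and> card S = alpha V E"
proof -
  have fin: "finite {card S | S. independent V E S}"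
  proof -
    have "{card S | S. independent V E S} \<subseteq> card ` Pow V" unfolding independent_def by auto
    then show ?thesis using finV by (meson finite_Pow_iff finite_imageI finite_subset)
  qed
  have ne: "{card S | S. independent V E S} \<noteq> {}"
    using independent_def by fastforce
  show "\<And>S. independent V E S \<Longrightarrow> card S \<le> alpha V E"
    unfolding alpha_def using fin by (intro Max_ge) auto
  show "\<exists>S. independent V E S \<and> card S = alpha V E"
    using Max_in[OF fin ne] unfolding alpha_def by auto
qed

lemma opt_card:
  fixes V :: "'a set" and E z0 \<gamma> C
  assumes finV: "finite V"
    and symE: "\<forall>i\<in>V. \<forall>j\<in>V. E i j \<longleftrightarrow> E j i"
    and z0pos: "z0 > 0" and gpos: "\<gamma> > 0"
    and small: "sqrt \<gamma> * z0 < (real (card V) + 1) / (2 * (2 * real (card V) + 1))"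
    and Vne: "V \<noteq> {}"
    and opt: "optimal V E z0 \<gamma> C"
  shows "fst C \<subseteq> V \<and> card (fst C) = alpha V E"
proof -
  obtain M z p where C: "C = (M, z, p)" by (cases C) auto
  have feas: "feasible V E z0 C" and best: "\<And>C'. feasible V E z0 C' \<Longrightarrow> profit \<gamma> C' \<le> profit \<gamma> C"
    using opt unfolding optimal_def by auto
  have MV: "M \<subseteq> V" and zpos: "z > 0" and pr: "\<And>i. i \<in> M \<Longrightarrow> p i \<le> gg z0 z (mcount V E M i)"
    using feas unfolding C feasible_def gg_def by auto
  have finM: "finite M" using MV finV finite_subset by auto
  define a where "a = alpha V E"
  define s where "s = sqrt \<gamma>"
  have spos: "s > 0" using gpos s_def by simp
  have gs: "\<gamma> = s^2" using gpos s_def by simp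
  have half: "(real (card V) + 1) / (2 * (2 * real (card V) + 1)) \<le> 1/2" by (simp add: divide_simps)
  have sz: "2 * s * z0 < 1" using small half unfolding s_def by linarith
  obtain S where S: "independent V E S" "card S = a" using alpha_facts(2)[OF finV] a_def by blast
  have ale: "\<And>S. independent V E S \<Longrightarrow> card S \<le> a" using alpha_facts(1)[OF finV] a_def by blast
  have a1: "a \<ge> 1"
  proof -
    obtain v where "v \<in> V" using Vne by auto
    then have "independent V E {v}" unfolding independent_def by auto
    then show ?thesis using ale by fastforce
  qed
  have sqa: "sqrt (real a) \<ge> 1" using a1 by simp
  define zs where "zs = sqrt (real a) / s - z0"
  have zspos: "zs > 0"
  proof -
    have "z0 < 1 / (2 * s)" using sz spos by (simp add: field_simps)
    also have "\<dots> = (1/2) / s" by simp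
    also have "\<dots> < sqrt (real a) / s" using sqa spos by (intro divide_strict_right_mono) linarith+
    finally show ?thesis unfolding zs_def by simp
  qed
  have z0zs: "z0 + zs = sqrt (real a) / s" unfolding zs_def by simp
  define H where "H = (\<lambda>m::real. m / z0 - 2 * s * sqrt m + \<gamma> * z0)"
  have mc0: "\<And>i. i \<in> S \<Longrightarrow> mcount V E S i = 0"
    using S(1) unfolding independent_def mcount_def nbrs_def by (auto simp: card_eq_0_iff)
  have gg0: "\<And>w. gg z0 w 0 = 1 / z0 - 1 / (z0 + w)" unfolding gg_def by simp
  have feasS: "feasible V E z0 (S, zs, \<lambda>i. gg z0 zs 0)"
    using S(1) zspos z0pos mc0 unfolding feasible_def independent_def gg_def
    by (auto simp: divide_simps)
  have profS: "profit \<gamma> (S, zs, \<lambda>i. gg z0 zs 0) = H a"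
  proof -
    have "profit \<gamma> (S, zs, \<lambda>i. gg z0 zs 0) = real a * (1 / z0 - s / sqrt (real a)) - s^2 * (sqrt (real a) / s - z0)"
      unfolding profit_def gg0 z0zs using S(2) gs zs_def by simp
    also have "\<dots> = H a" unfolding H_def gs using spos sqa
      by (simp add: field_simps power2_eq_square)
    finally show ?thesis .
  qed
  have lower: "H a \<le> (\<Sum>i\<in>M. gg z0 z (mcount V E M i)) - \<gamma> * z"
  proof -
    have "H a \<le> profit \<gamma> C" using best[OF feasS] profS by simp
    also have "\<dots> = (\<Sum>i\<in>M. p i) - \<gamma> * z" unfolding C profit_def by simp
    also have "\<dots> \<le> (\<Sum>i\<in>M. gg z0 z (mcount V E M i)) - \<gamma> * z"
      using pr by (simp add: sum_mono)
    finally show ?thesis .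
  qed
  define I where "I = {i \<in> M. mcount V E M i = 0}"
  define J where "J = M - I"
  have finI: "finite I" "finite J" using finM I_def J_def by auto
  have IJ: "M = I \<union> J" "I \<inter> J = {}" unfolding I_def J_def by auto
  have noedgeI: "\<And>i j. i \<in> I \<Longrightarrow> j \<in> M \<Longrightarrow> j \<noteq> i \<Longrightarrow> \<not> E i j"
  proof
    fix i j assume i: "i \<in> I" and j: "j \<in> M" "j \<noteq> i" and e: "E i j"
    have "j \<in> nbrs V E i \<inter> M" using j e MV unfolding nbrs_def by auto
    moreover have "finite (nbrs V E i \<inter> M)" using finM by simp
    ultimately have "mcount V E M i > 0" unfolding mcount_def by (auto simp: card_gt_0_iff)
    then show False using i I_def by simp
  qed
  have indI: "independent V E I" using noedgeI MV unfolding independent_def I_def by auto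
  have boundI: "(\<Sum>i\<in>I. gg z0 z (mcount V E M i)) - \<gamma> * z \<le> H (card I)"
  proof -
    have "(\<Sum>i\<in>I. gg z0 z (mcount V E M i)) = real (card I) * (1/z0 - 1/(z0+z))"
      unfolding I_def using gg0 by simp
    also have "\<dots> - \<gamma> * z = real (card I) / z0 + \<gamma> * z0 - (real (card I) / (z0 + z) + \<gamma> * (z0 + z))"
      by (simp add: algebra_simps)
    also have "\<dots> \<le> real (card I) / z0 + \<gamma> * z0 - 2 * sqrt \<gamma> * sqrt (real (card I))"
      using amgm[of "real (card I)" "z0 + z" \<gamma>] z0pos zpos gpos by simp
    finally show ?thesis unfolding H_def s_def by simp
  qed
  have sumsplit: "(\<Sum>i\<in>M. gg z0 z (mcount V E M i)) = (\<Sum>i\<in>I. gg z0 z (mcount V E M i)) + (\<Sum>i\<in>J. gg z0 z (mcount V E M i))"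
    using IJ finI by (simp add: sum.union_disjoint)
  have "card M = a"
  proof (rule ccontr)
    assume neq: "card M \<noteq> a"
    show False
    proof (cases "J = {}")
      case True
      then have MI: "M = I" using IJ by auto
      then have "card M < a" using ale[OF indI] neq by simp
      then have "H (card M) < H a" unfolding H_def
        using H_strict[of "real (card M)" "real a" s z0] a1 spos z0pos sz by simp
      moreover have "(\<Sum>i\<in>M. gg z0 z (mcount V E M i)) - \<gamma> * z \<le> H (card M)"
        using sumsplit True boundI MI by simp
      ultimately show False using lower by simp
    next
      case False
      have mcJ: "\<And>i. i \<in> J \<Longrightarrow> mcount V E J i = mcount V E M i"
      proof -
        fix i assume iJ: "i \<in> J"
        have "nbrs V E i \<inter> M = nbrs V E i \<inter> J"
        proof (intro equalityI subsetI)
          fix j assume j: "j \<in> nbrs V E i \<inter> M"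
          have "j \<notin> I"
          proof
            assume "j \<in> I"
            moreover have "i \<in> M" "i \<noteq> j" "E j i" using iJ j symE MV unfolding J_def nbrs_def by auto
            ultimately show False using noedgeI by blast
          qed
          then show "j \<in> nbrs V E i \<inter> J" using j J_def by auto
        qed (auto simp: J_def)
        then show "mcount V E J i = mcount V E M i" unfolding mcount_def by simp
      qed
      have JV: "J \<subseteq> V" using MV J_def by auto
      obtain T where T: "T \<subseteq> J" "independent V E T"
        "(\<Sum>i\<in>J. 1 / (real (mcount V E J i) + 1)) \<le> real (card T)"
        using caro_wei[OF finV symE finI(2) JV] by blast
      have mJ1: "\<And>i. i \<in> J \<Longrightarrow> mcount V E M i \<ge> 1" unfolding J_def I_def by auto
      have boundJ: "(\<Sum>i\<in>J. gg z0 z (mcount V E M i)) \<le> 2 * real (card T) / (5 * z0)"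
      proof -
        have "(\<Sum>i\<in>J. gg z0 z (mcount V E M i)) \<le> (\<Sum>i\<in>J. 2 / (5 * z0) * (1 / (real (mcount V E J i) + 1)))"
        proof (intro sum_mono)
          fix i assume iJ: "i \<in> J"
          have "gg z0 z (mcount V E M i) \<le> 2 / (5 * (real (mcount V E M i) + 1) * z0)"
            using gg_bound[OF z0pos zpos mJ1[OF iJ]] .
          also have "\<dots> = 2 / (5 * z0) * (1 / (real (mcount V E J i) + 1))"
            using mcJ[OF iJ] by simp
          finally show "gg z0 z (mcount V E M i) \<le> 2 / (5 * z0) * (1 / (real (mcount V E J i) + 1))" .
        qed
        also have "\<dots> = 2 / (5 * z0) * (\<Sum>i\<in>J. 1 / (real (mcount V E J i) + 1))"
          by (simp add: sum_distrib_left)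
        also have "\<dots> \<le> 2 / (5 * z0) * real (card T)"
          using T(3) z0pos by (intro mult_left_mono) auto
        finally show ?thesis by simp
      qed
      have Tpos: "card T \<ge> 1"
      proof -
        have "0 < (\<Sum>i\<in>J. 1 / (real (mcount V E J i) + 1))"
          using False finI by (intro sum_pos) auto
        then show ?thesis using T(3) by linarith
      qed
      have indIT: "independent V E (I \<union> T)"
        using indI T(2) noedgeI symE T(1) IJ MV unfolding independent_def J_def
        by (smt (verit, del_insts) Diff_iff Un_iff subset_iff)
      have cIT: "card I + card T \<le> a"
      proof -
        have "I \<inter> T = {}" using T(1) IJ by auto
        moreover have "finite T" using T(1) finI finite_subset by auto
        ultimately have "card (I \<union> T) = card I + card T" using finI by (simp add: card_Un_disjoint)
        then show ?thesis using ale[OF indIT] by simp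
      qed
      have n2: "card V \<ge> 2"
      proof -
        obtain i where iJ: "i \<in> J" using False by auto
        then have "mcount V E M i \<ge> 1" using mJ1 by simp
        then obtain j where "j \<in> nbrs V E i \<inter> M" unfolding mcount_def
          by (metis card.empty ex_in_conv not_one_le_zero)
        then have "j \<in> V" "i \<in> V" "i \<noteq> j" using iJ JV unfolding nbrs_def by auto
        then have "{i, j} \<subseteq> V" "card {i, j} = 2" by auto
        then show ?thesis using finV card_mono by metis
      qed
      have sz3: "s * z0 < 3/10"
      proof -
        have "(real (card V) + 1) / (2 * (2 * real (card V) + 1)) \<le> 3/10"
          using n2 by (simp add: divide_simps)
        then show ?thesis using small unfolding s_def by linarith
      qed
      have "(\<Sum>i\<in>M. gg z0 z (mcount V E M i)) - \<gamma> * z \<le> H (card I) + 2 * real (card T) / (5 * z0)"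
        using sumsplit boundI boundJ by simp
      also have "\<dots> < H (card I + card T)"
        using H_jump[of "real (card I)" "real (card T)" s z0] Tpos spos z0pos sz3 unfolding H_def by simp
      also have "\<dots> \<le> H a"
        using H_mono[of "real (card I + card T)" "real a" s z0] cIT a1 spos z0pos sz unfolding H_def by simp
      finally show False using lower by simp
    qed
  qed
  then show ?thesis using MV C a_def by simp
qed

lemma tangent_ineq:
  fixes A B :: real
  assumes "A > 0" "B > 0"
  shows "- (1 / B) \<le> - (1 / A) + (1 / A)^2 * (B - A)"
proof -
  have "0 < A^2 * B" using assms by (intro mult_pos_pos) auto
  then have "0 \<le> (A - B)^2 / (A^2 * B)" by (intro divide_nonneg_pos) auto
  also have "(A - B)^2 / (A^2 * B) = - (1 / A) + (1 / A)^2 * (B - A) + 1 / B"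
    using assms by (simp add: field_simps power2_eq_square)
  finally show ?thesis by simp
qed

lemma u_props:
  fixes z0 zs :: real and N :: nat
  assumes z0: "z0 > 0" and zs: "zs > 0"
  defines "f \<equiv> \<lambda>k::nat. 1 / (z0 + real k * zs)"
  defines "u \<equiv> \<lambda>x. Min ((\<lambda>k. - f k + zs * (f k)^2 * (x - real k)) ` {..N})"
  shows "mono u" "concave_on UNIV u" "\<And>j. j \<le> N \<Longrightarrow> u (real j) = - f j"
proof -
  define L where "L = (\<lambda>k x. - f k + zs * (f k)^2 * (x - real k))"
  have uL: "u = (\<lambda>x. Min ((\<lambda>k. L k x) ` {..N}))" unfolding u_def L_def by simp
  have fin: "finite ((\<lambda>k. L k x) ` {..N})" for x by simp
  have ne: "(\<lambda>k. L k x) ` {..N} \<noteq> {}" for x by simp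
  have Lmono: "x \<le> y \<Longrightarrow> L k x \<le> L k y" for k x y
    unfolding L_def using zs by (intro add_left_mono mult_left_mono) auto
  show "mono u"
  proof (rule monoI)
    fix x y :: real assume xy: "x \<le> y"
    have "u y \<in> (\<lambda>k. L k y) ` {..N}" using Min_in[OF fin ne, of y] uL by simp
    then obtain k where k: "k \<in> {..N}" "u y = L k y" by auto
    have "u x \<le> L k x" unfolding uL using k(1) by (intro Min_le) auto
    also have "\<dots> \<le> L k y" using Lmono xy by simp
    finally show "u x \<le> u y" using k by simp
  qed
  show "concave_on UNIV u"
    unfolding concave_on_iff
  proof (intro conjI ballI allI impI)
    fix x y a b :: real assume ab: "0 \<le> a" "0 \<le> b" "a + b = 1"
    show "a * u x + b * u y \<le> u (a *\<^sub>R x + b *\<^sub>R y)"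
      unfolding uL
    proof (subst Min_ge_iff[OF fin ne], intro ballI)
      fix t assume "t \<in> (\<lambda>k. L k (a *\<^sub>R x + b *\<^sub>R y)) ` {..N}"
      then obtain k where k: "k \<in> {..N}" "t = L k (a *\<^sub>R x + b *\<^sub>R y)" by auto
      have e: "L k (a *\<^sub>R x + b *\<^sub>R y) = a * L k x + b * L k y"
      proof -
        have b: "b = 1 - a" using ab by simp
        show ?thesis unfolding L_def b by (simp add: algebra_simps)
      qed
      have "Min ((\<lambda>k. L k x) ` {..N}) \<le> L k x" "Min ((\<lambda>k. L k y) ` {..N}) \<le> L k y"
        using k(1) by (auto intro: Min_le)
      then have "a * Min ((\<lambda>k. L k x) ` {..N}) + b * Min ((\<lambda>k. L k y) ` {..N}) \<le> a * L k x + b * L k y"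
        using ab by (intro add_mono mult_left_mono) auto
      then show "a * Min ((\<lambda>k. L k x) ` {..N}) + b * Min ((\<lambda>k. L k y) ` {..N}) \<le> t"
        using k e by simp
    qed
  qed (simp add: convex_UNIV)
  fix j assume jN: "j \<le> N"
  have "\<forall>k\<in>{..N}. - f j \<le> L k (real j)"
  proof
    fix k assume "k \<in> {..N}"
    have A: "z0 + real k * zs > 0" "z0 + real j * zs > 0" using z0 zs by (auto intro!: add_pos_nonneg)
    have "zs * (real j - real k) = (z0 + real j * zs) - (z0 + real k * zs)" by (simp add: algebra_simps)
    then show "- f j \<le> L k (real j)"
    proof -
      have eq: "zs * (1 / (z0 + real k * zs))^2 * (real j - real k) = (1 / (z0 + real k * zs))^2 * ((z0 + real j * zs) - (z0 + real k * zs))"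
        by (simp add: algebra_simps)
      have "- (1 / (z0 + real j * zs)) \<le> - (1 / (z0 + real k * zs)) + (1 / (z0 + real k * zs))^2 * ((z0 + real j * zs) - (z0 + real k * zs))"
        using tangent_ineq[OF A] .
      then show ?thesis unfolding L_def f_def using eq by linarith
    qed
  qed
  moreover have "L j (real j) = - f j" unfolding L_def by simp
  then have "- f j \<in> (\<lambda>k. L k (real j)) ` {..N}" using jN by (metis atMost_iff image_eqI)
  ultimately show "u (real j) = - f j" unfolding uL using jN
    by (intro Min_eqI) auto
qed

lemma kvec_sum:
  "sum_list (map F (kvec V E M)) = (\<Sum>i\<in>V-M. F (mcount V E M i))"
  unfolding kvec_def
  by (simp add: rev_map[symmetric] sum_mset_sum_list[symmetric]
      sum_unfold_sum_mset image_mset.compositionality comp_def)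

lemma kvec_length: "finite V \<Longrightarrow> length (kvec V E M) = card (V - M)"
  unfolding kvec_def
  by (metis length_rev mset_sorted_list_of_multiset size_mset size_image_mset size_mset_set)

lemma mcount_le: "finite V \<Longrightarrow> mcount V E M i \<le> card V"
  unfolding mcount_def nbrs_def by (rule card_mono) auto

lemma list_all2_sum_le:
  assumes "list_all2 P xs ys" "\<And>x y. P x y \<Longrightarrow> (F x :: real) \<le> F y"
  shows "sum_list (map F xs) \<le> sum_list (map F ys)"
  using assms(1) by (induction rule: list_all2_induct) (auto intro: add_mono assms(2))

theorem proposition3:
  fixes V :: "'a set" and E :: "'a \<Rightarrow> 'a \<Rightarrow> bool" and z0 \<gamma> :: real
    and C C' :: "'a contract"
  assumes finV: "finite V"
    and symE: "\<forall>i\<in>V. \<forall>j\<in>V. E i j \<longleftrightarrow> E j i"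
    and irrE: "\<forall>i\<in>V. \<not> E i i"
    and z0pos: "z0 > 0" and gpos: "\<gamma> > 0"
    and z0small: "z0 < 1 / (2 * sqrt \<gamma>) * ((real (card V) + 1) / (2 * real (card V) + 1))"
    and optC: "optimal V E z0 \<gamma> C" and optC': "optimal V E z0 \<gamma> C'"
    and cond: "list_all2 (\<ge>) (kvec V E (target C)) (kvec V E (target C'))
      \<or> (sum_list (kvec V E (target C)) = sum_list (kvec V E (target C'))
         \<and> ssd (map real (kvec V E (target C))) (map real (kvec V E (target C'))))"
  shows "welfare V E z0 \<gamma> (target C) \<ge> welfare V E z0 \<gamma> (target C')"
proof (cases "V = {}")
  case True
  have "fst C \<subseteq> V" "fst C' \<subseteq> V" using optC optC' unfolding optimal_def feasible_def
    by (auto split: prod.splits)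
  then show ?thesis using True unfolding target_def by simp
next
  case Vne: False
  define s where "s = sqrt \<gamma>"
  have spos: "s > 0" using gpos s_def by simp
  have small: "sqrt \<gamma> * z0 < (real (card V) + 1) / (2 * (2 * real (card V) + 1))"
  proof -
    define X where "X = (real (card V) + 1) / (2 * (2 * real (card V) + 1))"
    have "1 / (2 * s) * ((real (card V) + 1) / (2 * real (card V) + 1)) = X / s"
      unfolding X_def by (simp add: field_simps)
    then have "z0 < X / s" using z0small unfolding s_def[symmetric] by simp
    then have "z0 * s < X" using spos by (simp add: pos_less_divide_eq)
    then show ?thesis unfolding X_def s_def[symmetric] by (simp add: mult.commute)
  qed
  define M where "M = target C"
  define M' where "M' = target C'"
  define a where "a = alpha V E"
  have cM: "M \<subseteq> V" "card M = a" using opt_card[OF finV symE z0pos gpos small Vne optC]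
    unfolding M_def target_def a_def by auto
  have cM': "M' \<subseteq> V" "card M' = a" using opt_card[OF finV symE z0pos gpos small Vne optC']
    unfolding M'_def target_def a_def by auto
  have a1: "a \<ge> 1"
  proof -
    obtain v where "v \<in> V" using Vne by auto
    then have "independent V E {v}" unfolding independent_def by auto
    then show ?thesis using alpha_facts(1)[OF finV] a_def by fastforce
  qed
  have sqa: "sqrt (real a) \<ge> 1" using a1 by simp
  have half: "(real (card V) + 1) / (2 * (2 * real (card V) + 1)) \<le> 1/2" by (simp add: divide_simps)
  have sz: "2 * s * z0 < 1" using small half unfolding s_def by linarith
  define zs where "zs = sqrt (real a / \<gamma>) - z0"
  have zspos: "zs > 0"
  proof -
    have "z0 < 1 / (2 * s)" using sz spos by (simp add: field_simps)
    also have "\<dots> = (1/2) / s" by simp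
    also have "\<dots> < sqrt (real a) / s" using sqa spos by (intro divide_strict_right_mono) linarith+
    finally show ?thesis unfolding zs_def s_def by (simp add: real_sqrt_divide)
  qed
  define f where "f = (\<lambda>k::nat. 1 / (z0 + real k * zs))"
  have W: "welfare V E z0 \<gamma> X = - (real (card X) / z0) - sum_list (map f (kvec V E X))" for X
    unfolding welfare_def kvec_sum f_def zs_def a_def by simp
  have len: "length (kvec V E M) = length (kvec V E M')"
    using kvec_length[OF finV] cM cM' finV by (simp add: card_Diff_subset finite_subset)
  have key: "sum_list (map f (kvec V E M)) \<le> sum_list (map f (kvec V E M'))"
    using cond unfolding M_def[symmetric] M'_def[symmetric]
  proof
    assume la: "list_all2 (\<ge>) (kvec V E M) (kvec V E M')"
    show ?thesis
    proof (rule list_all2_sum_le[OF la])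
      fix x y :: nat assume "y \<le> x"
      then show "f x \<le> f y" unfolding f_def using z0pos zspos
        by (intro divide_left_mono add_left_mono mult_right_mono add_pos_nonneg mult_pos_pos) auto
    qed
  next
    assume "sum_list (kvec V E M) = sum_list (kvec V E M') \<and> ssd (map real (kvec V E M)) (map real (kvec V E M'))"
    then have sd: "ssd (map real (kvec V E M)) (map real (kvec V E M'))" by simp
    define u where "u = (\<lambda>x. Min ((\<lambda>k. - f k + zs * (f k)^2 * (x - real k)) ` {..card V}))"
    have up: "mono u" "concave_on UNIV u" "\<And>j. j \<le> card V \<Longrightarrow> u (real j) = - f j"
      unfolding u_def f_def
      by (rule u_props(1)[OF z0pos zspos], rule u_props(2)[OF z0pos zspos], erule u_props(3)[OF z0pos zspos])
    have su: "sum_list (map u (map real (kvec V E X))) = - sum_list (map f (kvec V E X))" for X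
    proof -
      have "sum_list (map u (map real (kvec V E X))) = sum_list (map (\<lambda>k. u (real k)) (kvec V E X))"
        by (simp add: comp_def)
      also have "\<dots> = (\<Sum>i\<in>V-X. u (real (mcount V E X i)))" by (rule kvec_sum)
      also have "\<dots> = (\<Sum>i\<in>V-X. - f (mcount V E X i))"
        using up(3) mcount_le[OF finV] by simp
      also have "\<dots> = - sum_list (map f (kvec V E X))" by (simp add: kvec_sum sum_negf)
      finally show ?thesis .
    qed
    have ineq: "sum_list (map u (map real (kvec V E M'))) / real (length (kvec V E M'))
        \<le> sum_list (map u (map real (kvec V E M))) / real (length (kvec V E M))"
      using sd up(1,2) unfolding ssd_def by auto
    show ?thesis
    proof (cases "length (kvec V E M) = 0")
      case True
      then show ?thesis using len by simp
    next
      case False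
      then have "sum_list (map u (map real (kvec V E M'))) \<le> sum_list (map u (map real (kvec V E M)))"
        using ineq len by (simp add: divide_right_mono_neg divide_le_cancel)
      then show ?thesis using su by simp
    qed
  qed
  show ?thesis unfolding M_def[symmetric] M'_def[symmetric] W using cM cM' key by simp
qed

end
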